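(* Let $G$ be a simple graph and $a,b$ two distinct vertices of $G$. Then the adjacency matrix of $G$ is nondegenerate over $\mathbb{F}_2$ if and only if the adjacency matrix of $\widetilde G_{ab}$ is nondegenerate over $\mathbb{F}_2$; i.e. the nondegeneracy $\nu$ satisfies $\nu(\widetilde G_{ab})=\nu(G)$.
   Context: The adjacency matrix $A(G)$ of a simple graph $G$ with vertices numbered $1,\dots,n$ is the $n\times n$ matrix over $\mathbb{F}_2$ with entry $1$ in position $(i,j)$ iff vertices $i,j$ are adjacent, and $0$ otherwise (zero diagonal). $G$ is nondegenerate if $\det A(G)=1$ over $\mathbb{F}_2$; the nondegeneracy $\nu(G)$ is $1$ if $G$ is nondegenerate and $0$ otherwise. The graph $\widetilde G_{ab}$ (second Vassiliev move) is obtained from $G$ by switching the adjacency between $a$ and each vertex $v\neq a$ of $G$ adjacent to $b$. *)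

theory Defs
  imports "HOL-Analysis.Analysis" "HOL-Library.Z2"
begin

definition simple_graph :: "('v \<Rightarrow> 'v \<Rightarrow> bool) \<Rightarrow> bool" where
  "simple_graph E \<longleftrightarrow> (\<forall>x y. E x y \<longrightarrow> E y x) \<and> (\<forall>x. \<not> E x x)"

definition adj_matrix :: "('v::finite \<Rightarrow> 'v \<Rightarrow> bool) \<Rightarrow> bit ^ 'v ^ 'v" where
  "adj_matrix E = (\<chi> i j. if E i j then 1 else 0)"

definition nondegenerate :: "('v::finite \<Rightarrow> 'v \<Rightarrow> bool) \<Rightarrow> bool" where
  "nondegenerate E \<longleftrightarrow> det (adj_matrix E) = 1"

definition nondegeneracy :: "('v::finite \<Rightarrow> 'v \<Rightarrow> bool) \<Rightarrow> nat" where
  "nondegeneracy E = (if nondegenerate E then 1 else 0)"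

definition vassiliev2 :: "('v \<Rightarrow> 'v \<Rightarrow> bool) \<Rightarrow> 'v \<Rightarrow> 'v \<Rightarrow> ('v \<Rightarrow> 'v \<Rightarrow> bool)" where
  "vassiliev2 E a b = (\<lambda>x y.
     if (x = a \<and> y \<noteq> a \<and> E b y) \<or> (y = a \<and> x \<noteq> a \<and> E b x) then \<not> E x y else E x y)"

end

theory Submission
  imports Defs
begin

lemma bit_cases_add: "(if P then 1 else 0) + (if Q then 1 else 0) = (if P \<noteq> Q then 1 else (0::bit))"
  by auto

theorem mainTheorem2:
  fixes E :: "'v::finite \<Rightarrow> 'v \<Rightarrow> bool" and a b :: 'v
  assumes "simple_graph E" and "a \<noteq> b"
  shows "(nondegenerate (vassiliev2 E a b) \<longleftrightarrow> nondegenerate E)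
         \<and> nondegeneracy (vassiliev2 E a b) = nondegeneracy E"
proof -
  have sym: "\<And>x y. E x y = E y x" and irr: "\<And>x. \<not> E x x"
    using assms(1) unfolding simple_graph_def by blast+
  define A where "A = adj_matrix E"
  define B where "B = (\<chi> k. if k = a then row a A + (1::bit) *s row b A else row k A)"
  define C where "C = (\<chi> k. if k = a then row a (transpose B) + (1::bit) *s row b (transpose B) else row k (transpose B))"
  have dB: "det B = det A" unfolding B_def by (rule det_row_operation[OF assms(2)])
  have dC: "det C = det (transpose B)" unfolding C_def by (rule det_row_operation[OF assms(2)])
  have eq: "adj_matrix (vassiliev2 E a b) = C"
  proof (simp add: vec_eq_iff, intro allI)
    fix x y
    show "adj_matrix (vassiliev2 E a b) $ x $ y = C $ x $ y"
      unfolding C_def B_def A_def adj_matrix_def vassiliev2_def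
      using assms(2) irr sym[of a b] sym[of b x] sym[of b y] sym[of x y] sym[of a y] sym[of a x]
      by (auto simp: row_def transpose_def vec_eq_iff bit_cases_add)
  qed
  have "det (adj_matrix (vassiliev2 E a b)) = det (adj_matrix E)"
    using eq dC dB det_transpose A_def by metis
  then show ?thesis unfolding nondegeneracy_def nondegenerate_def by simp
qed

end
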